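(* Let $\nu<0$ and define $\widetilde{\mathcal{R}}_\nu:\mathbb{R}\to\mathbb{R}$ by $$\widetilde{\mathcal{R}}_\nu(x):=\frac{D_{\nu-1}(x)^2}{D_\nu(x)\,D_{\nu-2}(x)},\qquad x\in\mathbb{R},$$ where $D_\alpha$ denotes the parabolic cylinder function of index $\alpha$. Then $\widetilde{\mathcal{R}}_\nu$ is strictly decreasing on $\mathbb{R}$, and $$1<\widetilde{\mathcal{R}}_\nu(x)<\frac{\nu-1}{\nu}\qquad\text{for all }x\in\mathbb{R}.$$
   Context: For $\alpha<0$, the parabolic cylinder function $D_\alpha:\mathbb{R}\to\mathbb{R}$ is given by $$D_\alpha(x)=\frac{e^{-x^2/4}}{\Gamma(-\alpha)}\int_0^\infty t^{-\alpha-1}e^{-\frac{t^2}{2}-xt}\,dt,\qquad x\in\mathbb{R},$$ where $\Gamma$ is Euler's Gamma function. In particular $D_\alpha(x)>0$ for all $x$ when $\alpha<0$. *)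

theory Defs
  imports "HOL-Analysis.Analysis"
begin

text \<open>Parabolic cylinder function for negative index alpha, via its integral
representation (only meaningful for alpha < 0).\<close>
definition pcf :: "real \<Rightarrow> real \<Rightarrow> real" where
  "pcf \<alpha> x = exp (- (x\<^sup>2) / 4) / Gamma (- \<alpha>) *
     integral {0<..} (\<lambda>t. t powr (- \<alpha> - 1) * exp (- (t\<^sup>2) / 2 - x * t))"

definition Rtilde :: "real \<Rightarrow> real \<Rightarrow> real" where
  "Rtilde \<nu> x = (pcf (\<nu> - 1) x)\<^sup>2 / (pcf \<nu> x * pcf (\<nu> - 2) x)"

end

theory Submission
  imports Defs "HOL-Real_Asymp.Real_Asymp"
begin


definition kf :: "real \<Rightarrow> real \<Rightarrow> real \<Rightarrow> real \<Rightarrow> real" where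
  "kf s c x t = (if 0 < t then t powr (s - 1) * exp (- (c * t\<^sup>2) / 2 - x * t) else 0)"

definition Kf :: "real \<Rightarrow> real \<Rightarrow> real \<Rightarrow> real" where
  "Kf s c x = integral\<^sup>L lborel (kf s c x)"

lemma kf_meas[measurable]: "kf s c x \<in> borel_measurable borel"
  unfolding kf_def by measurable

lemma kf_nonneg: "0 \<le> kf s c x t"
  unfolding kf_def by auto

lemma kf_pos: "0 < t \<Longrightarrow> 0 < kf s c x t"
  unfolding kf_def by auto

definition gb :: "real \<Rightarrow> real \<Rightarrow> real" where
  "gb s t = (t powr (s - 1) / exp t) * indicator {0..} t"

lemma gb_meas[measurable]: "gb s \<in> borel_measurable borel"
  unfolding gb_def by measurable

lemma gb_integrable: assumes "s > 0" shows "integrable lborel (gb s)"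
proof -
  have "integral\<^sup>N lborel (\<lambda>t. ennreal (t powr (s - 1) / exp t) * indicator {0..} t) = ennreal (Gamma s)"
    by (rule nn_integral_has_integral_lebesgue'[OF _ Gamma_integral_real[OF assms]]) auto
  then have "integral\<^sup>N lborel (\<lambda>t. ennreal (gb s t)) = ennreal (Gamma s)"
  proof -
    have "(\<lambda>t. ennreal (gb s t)) = (\<lambda>t. ennreal (t powr (s - 1) / exp t) * indicator {0..} t)"
      by (auto simp: gb_def indicator_def fun_eq_iff)
    then show ?thesis using \<open>integral\<^sup>N lborel _ = _\<close> by simp
  qed
  then show ?thesis
    by (intro integrableI_nn_integral_finite[where x="Gamma s"]) (auto simp: gb_def)
qed

lemma kf_bound:
  assumes "c > 0"
  shows "kf s c x t \<le> exp ((1 - x)\<^sup>2 / (2 * c)) * gb s t"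
proof (cases "0 < t")
  case True
  have "(c * t - (1 - x))\<^sup>2 \<ge> 0" by simp
  then have "- (c * t\<^sup>2) / 2 - x * t \<le> (1 - x)\<^sup>2 / (2 * c) + (- t)"
    using assms by (simp add: field_simps power2_eq_square)
  then have "exp (- (c * t\<^sup>2) / 2 - x * t) \<le> exp ((1 - x)\<^sup>2 / (2 * c)) * exp (- t)"
    by (simp add: exp_add[symmetric])
  then show ?thesis using True
    by (simp add: kf_def gb_def exp_minus field_simps mult_left_mono)
qed (simp add: kf_def gb_def)

lemma kf_integrable: assumes "s > 0" "c > 0" shows "integrable lborel (kf s c x)"
proof (rule Bochner_Integration.integrable_bound[OF integrable_mult_right[OF gb_integrable[OF assms(1)], of "exp ((1 - x)\<^sup>2 / (2 * c))"]])
  show "AE t in lborel. norm (kf s c x t) \<le> norm (exp ((1 - x)\<^sup>2 / (2 * c)) * gb s t)"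
    using kf_bound[OF assms(2)] kf_nonneg by (auto intro!: AE_I2 order_trans[OF _ abs_ge_self])
qed simp

lemma integral_pos_interval:
  fixes f :: "real \<Rightarrow> real"
  assumes "integrable lborel f" "\<And>y. 0 \<le> f y" "p < q" "\<And>y. p \<le> y \<Longrightarrow> y \<le> q \<Longrightarrow> 0 < f y"
  shows "0 < integral\<^sup>L lborel f"
proof -
  have "integral\<^sup>L lborel f \<ge> 0" by (simp add: assms integral_nonneg)
  moreover have "integral\<^sup>L lborel f \<noteq> 0"
  proof
    assume "integral\<^sup>L lborel f = 0"
    then have "AE y in lborel. f y = 0" using integral_nonneg_eq_0_iff_AE assms by auto
    then have "AE y in lborel. y \<notin> {p..q}" by eventually_elim (use assms in force)
    then obtain N where N: "{y \<in> space lborel. \<not> y \<notin> {p..q}} \<subseteq> N" "emeasure lborel N = 0" "N \<in> sets lborel"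
      by (rule AE_E)
    then have "emeasure lborel {p..q} \<le> emeasure lborel N" by (intro emeasure_mono) auto
    with N assms show False by simp
  qed
  ultimately show ?thesis by linarith
qed

lemma Kf_pos: assumes "s > 0" "c > 0" shows "0 < Kf s c x"
  unfolding Kf_def
  by (rule integral_pos_interval[of _ 1 2]) (auto simp: kf_integrable[OF assms] kf_nonneg kf_pos)

lemma Kf_HK:
  assumes "e > -1"
  shows "integral {0<..} (\<lambda>t. t powr e * exp (- (t\<^sup>2) / 2 - x * t)) = Kf (e + 1) 1 x"
proof -
  have "integral {0<..} (\<lambda>t. t powr e * exp (- (t\<^sup>2) / 2 - x * t))
      = integral UNIV (\<lambda>t. if t \<in> {0<..} then t powr e * exp (- (t\<^sup>2) / 2 - x * t) else 0)"
    by (rule Henstock_Kurzweil_Integration.integral_restrict_UNIV[symmetric])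
  also have "(\<lambda>t. if t \<in> {0<..} then t powr e * exp (- (t\<^sup>2) / 2 - x * t) else 0) = kf (e + 1) 1 x"
    by (auto simp: kf_def fun_eq_iff)
  also have "integral UNIV (kf (e + 1) 1 x) = Kf (e + 1) 1 x"
    unfolding Kf_def using assms by (intro integral_lborel kf_integrable) auto
  finally show ?thesis .
qed

lemma kf_shift: "kf (s + r) c x t = t powr r * kf s c x t"
proof (cases "0 < t")
  case True
  have "t powr (s + r - 1) = t powr r * t powr (s - 1)"
    using True by (simp add: powr_add[symmetric] algebra_simps)
  then show ?thesis using True by (simp add: kf_def)
qed (simp add: kf_def)

lemma kf_shift1: "kf (s + 1) c x t = t * kf s c x t"
  using kf_shift[of s 1 c x t] by (cases "0 < t") (auto simp: kf_def)

lemma kf_shift1': "kf (1 + s) c x t = t * kf s c x t"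
  using kf_shift1[of s c x t] by (simp add: add.commute)

lemma kf_shift2: "kf (s + 2) c x t = t\<^sup>2 * kf s c x t"
  using kf_shift[of s 2 c x t] by (cases "0 < t") (auto simp: kf_def)

lemma kf_shift2': "kf (2 + s) c x t = t\<^sup>2 * kf s c x t"
  using kf_shift2[of s c x t] by (simp add: add.commute)

lemma kf_scale:
  assumes "k > 0"
  shows "kf s c x (k * u) = k powr (s - 1) * kf s (c * k\<^sup>2) (x * k) u"
  using assms by (auto simp: kf_def powr_mult zero_less_mult_iff power_mult_distrib algebra_simps)

lemma Kf_scale:
  assumes "k > 0"
  shows "Kf s c x = k powr s * Kf s (c * k\<^sup>2) (x * k)"
proof -
  have "Kf s c x = \<bar>k\<bar> *\<^sub>R (\<integral>u. kf s c x (0 + k * u) \<partial>lborel)"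
    unfolding Kf_def using assms by (intro lborel_integral_real_affine) auto
  also have "\<dots> = k * (\<integral>u. k powr (s - 1) * kf s (c * k\<^sup>2) (x * k) u \<partial>lborel)"
    using assms by (simp add: kf_scale)
  also have "\<dots> = k powr s * Kf s (c * k\<^sup>2) (x * k)"
    using assms by (simp add: Kf_def powr_diff)
  finally show ?thesis .
qed

lemma Kf_CS:
  assumes "s > 0" "c > 0"
  shows "(Kf (s + 1) c x)\<^sup>2 < Kf s c x * Kf (s + 2) c x"
proof -
  define k where "k = Kf (s + 1) c x / Kf s c x"
  have s1: "s + 1 > 0" "s + 2 > 0" using assms by auto
  have eq: "(\<lambda>t. kf s c x t * (t - k)\<^sup>2) = (\<lambda>t. kf (s + 2) c x t - 2 * k * kf (s + 1) c x t + k\<^sup>2 * kf s c x t)"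
    by (auto simp: fun_eq_iff kf_shift1 kf_shift2 kf_shift1' kf_shift2' power2_eq_square algebra_simps)
  have int: "integrable lborel (\<lambda>t. kf s c x t * (t - k)\<^sup>2)"
    unfolding eq using kf_integrable[OF assms] kf_integrable[OF s1(1) assms(2)] kf_integrable[OF s1(2) assms(2)]
    by auto
  have "0 < integral\<^sup>L lborel (\<lambda>t. kf s c x t * (t - k)\<^sup>2)"
  proof (rule integral_pos_interval[OF int _, of "\<bar>k\<bar> + 1" "\<bar>k\<bar> + 2"])
    show "0 \<le> kf s c x y * (y - k)\<^sup>2" for y by (simp add: kf_nonneg)
    show "0 < kf s c x y * (y - k)\<^sup>2" if "\<bar>k\<bar> + 1 \<le> y" "y \<le> \<bar>k\<bar> + 2" for y
      using that by (intro mult_pos_pos kf_pos) auto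
  qed simp
  also have "integral\<^sup>L lborel (\<lambda>t. kf s c x t * (t - k)\<^sup>2) = Kf (s + 2) c x - 2 * k * Kf (s + 1) c x + k\<^sup>2 * Kf s c x"
    unfolding eq Kf_def using kf_integrable[OF assms] kf_integrable[OF s1(1) assms(2)] kf_integrable[OF s1(2) assms(2)]
    by simp
  finally have "0 < Kf (s + 2) c x - 2 * k * Kf (s + 1) c x + k\<^sup>2 * Kf s c x" .
  moreover have "Kf s c x > 0" using Kf_pos[OF assms] .
  ultimately show ?thesis unfolding k_def
    by (simp add: field_simps power2_eq_square)
qed



lemma cheb:
  fixes w A B :: "real \<Rightarrow> real"
  assumes iw: "integrable lborel w" and iA: "integrable lborel (\<lambda>y. w y * A y)"
    and iB: "integrable lborel (\<lambda>y. w y * B y)" and iAB: "integrable lborel (\<lambda>y. w y * A y * B y)"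
    and ord: "\<And>y y'. 0 \<le> w y * w y' * ((A y - A y') * (B y - B y'))"
    and pq: "p < q" "r < s"
    and strict: "\<And>y y'. p \<le> y \<Longrightarrow> y \<le> q \<Longrightarrow> r \<le> y' \<Longrightarrow> y' \<le> s \<Longrightarrow>
         0 < w y * w y' * ((A y - A y') * (B y - B y'))"
  shows "(\<integral>y. w y * A y \<partial>lborel) * (\<integral>y. w y * B y \<partial>lborel)
       < (\<integral>y. w y \<partial>lborel) * (\<integral>y. w y * A y * B y \<partial>lborel)"
proof -
  define I where "I = (\<integral>y. w y \<partial>lborel)"
  define IA where "IA = (\<integral>y. w y * A y \<partial>lborel)"
  define IB where "IB = (\<integral>y. w y * B y \<partial>lborel)"
  define IAB where "IAB = (\<integral>y. w y * A y * B y \<partial>lborel)"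
  define H where "H y y' = w y * w y' * ((A y - A y') * (B y - B y'))" for y y'
  have Heq: "H y = (\<lambda>y'. w y * (A y * B y) * w y' - (w y * A y) * (w y' * B y')
      - (w y * B y) * (w y' * A y') + w y * (w y' * A y' * B y'))" for y
    by (auto simp: H_def fun_eq_iff algebra_simps)
  have Hint: "integrable lborel (H y)" for y
    unfolding Heq using iw iA iB iAB by auto
  have Hval: "integral\<^sup>L lborel (H y) = w y * (A y * B y) * I - (w y * A y) * IB - (w y * B y) * IA + w y * IAB" for y
    unfolding Heq I_def IA_def IB_def IAB_def using iw iA iB iAB by simp
  define h where "h y = integral\<^sup>L lborel (H y)" for y
  have h_eq: "h = (\<lambda>y. I * (w y * A y * B y) - IB * (w y * A y) - IA * (w y * B y) + IAB * w y)"
    by (auto simp: h_def Hval fun_eq_iff algebra_simps)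
  have hint: "integrable lborel h"
    unfolding h_eq using iw iA iB iAB by auto
  have "0 < integral\<^sup>L lborel h"
  proof (rule integral_pos_interval[OF hint _ pq(1)])
    show "0 \<le> h y" for y unfolding h_def using Bochner_Integration.integral_nonneg[where M=lborel and f="H y"] by (simp add: H_def ord)
    show "0 < h y" if "p \<le> y" "y \<le> q" for y
      unfolding h_def by (rule integral_pos_interval[OF Hint _ pq(2)]) (auto simp: H_def ord strict that)
  qed
  also have "integral\<^sup>L lborel h = I * IAB - IB * IA - IA * IB + IAB * I"
    unfolding h_eq using iw iA iB iAB by (simp add: I_def IA_def IB_def IAB_def)
  finally show ?thesis unfolding I_def[symmetric] IA_def[symmetric] IB_def[symmetric] IAB_def[symmetric]
    by (simp add: algebra_simps)
qed



lemma Kf_ratio_mono: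
  assumes s: "s > 0" and c: "0 < c" "c < c'" and x: "x1 < x2"
  shows "Kf s c' x1 * Kf s c x2 < Kf s c x1 * Kf s c' x2"
proof -
  define w where "w = kf s c x1"
  define A where "A u = exp (- ((c' - c) * u\<^sup>2) / 2)" for u :: real
  define B where "B u = exp (- ((x2 - x1) * u))" for u :: real
  have c': "c' > 0" using c by simp
  have wA: "(\<lambda>y. w y * A y) = kf s c' x1"
    by (auto simp: fun_eq_iff w_def A_def kf_def mult.assoc exp_add[symmetric] algebra_simps diff_divide_distrib)
  have wB: "(\<lambda>y. w y * B y) = kf s c x2"
    by (auto simp: fun_eq_iff w_def B_def kf_def mult.assoc exp_add[symmetric] algebra_simps)
  have wAB: "(\<lambda>y. w y * A y * B y) = kf s c' x2"
    by (auto simp: fun_eq_iff w_def A_def B_def kf_def mult.assoc exp_add[symmetric] algebra_simps diff_divide_distrib)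
  have Amono: "A y' \<le> A y" if "0 < y" "y \<le> y'" for y y'
  proof -
    have "y\<^sup>2 \<le> y'\<^sup>2" using that by (intro power_mono) auto
    then have "(c' - c) * y\<^sup>2 \<le> (c' - c) * y'\<^sup>2" using c by (intro mult_left_mono) auto
    then show ?thesis by (simp add: A_def)
  qed
  have Amono': "A y' < A y" if "0 < y" "y < y'" for y y'
  proof -
    have "y\<^sup>2 < y'\<^sup>2" using that by (intro power_strict_mono) auto
    then have "(c' - c) * y\<^sup>2 < (c' - c) * y'\<^sup>2" using c by (intro mult_strict_left_mono) auto
    then show ?thesis by (simp add: A_def)
  qed
  have Bmono: "B y' \<le> B y" if "y \<le> y'" for y y'
    using that x by (simp add: B_def mult_left_mono)
  have Bmono': "B y' < B y" if "y < y'" for y y'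
    using that x by (simp add: B_def mult_strict_left_mono)
  have ord: "0 \<le> w y * w y' * ((A y - A y') * (B y - B y'))" for y y'
  proof (cases "0 < y \<and> 0 < y'")
    case True
    have "0 \<le> (A y - A y') * (B y - B y')"
    proof (cases "y \<le> y'")
      case True
      then show ?thesis using Amono[of y y'] Bmono[of y y'] \<open>0 < y \<and> 0 < y'\<close>
        by (intro mult_nonneg_nonneg) auto
    next
      case False
      then show ?thesis using Amono[of y' y] Bmono[of y' y] \<open>0 < y \<and> 0 < y'\<close>
        by (intro mult_nonpos_nonpos) auto
    qed
    then show ?thesis unfolding w_def using kf_nonneg by (metis mult_nonneg_nonneg)
  next
    case False
    then have "w y = 0 \<or> w y' = 0" by (auto simp: w_def kf_def)
    then show ?thesis by auto
  qed
  have strict: "0 < w y * w y' * ((A y - A y') * (B y - B y'))"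
    if "1 \<le> y" "y \<le> 2" "3 \<le> y'" "y' \<le> 4" for y y'
    using that Amono'[of y y'] Bmono'[of y y'] unfolding w_def
    by (intro mult_pos_pos kf_pos) auto
  have "(\<integral>y. w y * A y \<partial>lborel) * (\<integral>y. w y * B y \<partial>lborel)
       < (\<integral>y. w y \<partial>lborel) * (\<integral>y. w y * A y * B y \<partial>lborel)"
  proof (rule cheb[OF _ _ _ _ ord _ _ strict])
    show "integrable lborel w" unfolding w_def using kf_integrable s c by auto
    show "integrable lborel (\<lambda>y. w y * A y)" unfolding wA using kf_integrable s c' by auto
    show "integrable lborel (\<lambda>y. w y * B y)" unfolding wB using kf_integrable s c by auto
    show "integrable lborel (\<lambda>y. w y * A y * B y)" unfolding wAB using kf_integrable s c' by auto
  qed auto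
  then show ?thesis unfolding wA wB wAB by (simp add: Kf_def w_def)
qed



lemma Kf_meas_param: "(\<lambda>l. Kf m (1 + l\<^sup>2) (x * (1 + l))) \<in> borel_measurable borel"
  unfolding Kf_def kf_def by measurable

lemma nn_Kf: assumes "s > 0" "c > 0" shows "(\<integral>\<^sup>+t. ennreal (kf s c x t) \<partial>lborel) = ennreal (Kf s c x)"
  unfolding Kf_def using kf_integrable[OF assms] kf_nonneg
  by (intro nn_integral_eq_integral) auto

lemma prod_rep:
  fixes x r q :: real
  assumes r: "r > 0" and q: "q > 0"
  defines "g \<equiv> (\<lambda>l. if 0 < l then l powr (r - 1) * Kf (r + q) (1 + l\<^sup>2) (x * (1 + l)) else 0)"
  shows "integrable lborel g" "integral\<^sup>L lborel g = Kf r 1 x * Kf q 1 x"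
proof -
  have m: "r + q > 0" using r q by simp
  have gmeas: "g \<in> borel_measurable lborel"
    unfolding g_def using Kf_meas_param[of "r + q" x] by measurable
  have gnn: "0 \<le> g l" for l
    unfolding g_def using Kf_pos[OF m, of "1 + l\<^sup>2" "x * (1 + l)"]
    by (auto intro!: mult_nonneg_nonneg simp: add_pos_nonneg)
  have "ennreal (Kf r 1 x * Kf q 1 x) = ennreal (Kf q 1 x) * ennreal (Kf r 1 x)"
    using Kf_pos[OF r, of 1 x] Kf_pos[OF q, of 1 x] by (simp add: ennreal_mult' mult.commute)
  also have "\<dots> = (\<integral>\<^sup>+t. ennreal (kf q 1 x t) * ennreal (Kf r 1 x) \<partial>lborel)"
    using nn_Kf[OF q, of 1 x] by (simp add: nn_integral_multc)
  also have "\<dots> = (\<integral>\<^sup>+t. \<integral>\<^sup>+l. ennreal (kf q 1 x t * t * kf r 1 x (t * l)) \<partial>lborel \<partial>lborel)"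
  proof (rule nn_integral_cong)
    fix t :: real
    show "ennreal (kf q 1 x t) * ennreal (Kf r 1 x) = (\<integral>\<^sup>+l. ennreal (kf q 1 x t * t * kf r 1 x (t * l)) \<partial>lborel)"
    proof (cases "0 < t")
      case True
      have "ennreal (Kf r 1 x) = (\<integral>\<^sup>+s. ennreal (kf r 1 x s) \<partial>lborel)" using nn_Kf[OF r, of 1 x] by simp
      also have "\<dots> = \<bar>t\<bar> * (\<integral>\<^sup>+l. ennreal (kf r 1 x (0 + t * l)) \<partial>lborel)"
        using True by (intro nn_integral_real_affine) auto
      finally have "ennreal (kf q 1 x t) * ennreal (Kf r 1 x)
          = (\<integral>\<^sup>+l. ennreal (kf q 1 x t) * ennreal t * ennreal (kf r 1 x (t * l)) \<partial>lborel)"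
        using True by (simp add: nn_integral_cmult mult.assoc)
      also have "\<dots> = (\<integral>\<^sup>+l. ennreal (kf q 1 x t * t * kf r 1 x (t * l)) \<partial>lborel)"
        using True by (intro nn_integral_cong) (simp add: ennreal_mult' kf_nonneg)
      finally show ?thesis .
    next
      case False
      then show ?thesis by (simp add: kf_def)
    qed
  qed
  also have "\<dots> = (\<integral>\<^sup>+l. \<integral>\<^sup>+t. ennreal (kf q 1 x t * t * kf r 1 x (t * l)) \<partial>lborel \<partial>lborel)"
    by (subst lborel_pair.Fubini') (auto simp: case_prod_unfold cong: measurable_cong_sets)
  also have "\<dots> = (\<integral>\<^sup>+l. ennreal (g l) \<partial>lborel)"
  proof (rule nn_integral_cong)
    fix l :: real
    show "(\<integral>\<^sup>+t. ennreal (kf q 1 x t * t * kf r 1 x (t * l)) \<partial>lborel) = ennreal (g l)"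
    proof (cases "0 < l")
      case True
      have c: "1 + l\<^sup>2 > 0" by (simp add: add_pos_nonneg)
      have pw: "kf q 1 x t * t * kf r 1 x (t * l) = l powr (r - 1) * kf (r + q) (1 + l\<^sup>2) (x * (1 + l)) t" for t
      proof (cases "0 < t")
        case tpos: True
        have e: "t powr (r + q - 1) = t powr (q - 1) * t * t powr (r - 1)"
        proof -
          have "r + q - 1 = (q - 1) + 1 + (r - 1)" by simp
          then have "t powr (r + q - 1) = t powr (q - 1) * t powr 1 * t powr (r - 1)"
            by (simp only: powr_add)
          then show ?thesis using tpos by simp
        qed
        have "t powr (q - 1) * t * (t * l) powr (r - 1) = l powr (r - 1) * (t powr (q - 1) * t * t powr (r - 1))"
          using tpos True by (simp add: powr_mult mult_ac)
        also have "\<dots> = l powr (r - 1) * t powr (r + q - 1)" by (simp only: e)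
        finally have P: "t powr (q - 1) * t * (t * l) powr (r - 1) = l powr (r - 1) * t powr (r + q - 1)" .
        have EE: "exp (- (1 * t\<^sup>2) / 2 - x * t) * exp (- (1 * (t * l)\<^sup>2) / 2 - x * (t * l))
            = exp (- ((1 + l\<^sup>2) * t\<^sup>2) / 2 - x * (1 + l) * t)"
          unfolding exp_add[symmetric] by (rule arg_cong[where f=exp]) (simp add: power_mult_distrib field_simps)
        have k1: "kf q 1 x t * t * kf r 1 x (t * l) = (t powr (q - 1) * t * (t * l) powr (r - 1)) *
            (exp (- (1 * t\<^sup>2) / 2 - x * t) * exp (- (1 * (t * l)\<^sup>2) / 2 - x * (t * l)))"
          using tpos True by (simp only: kf_def if_True mult_pos_pos mult_ac)
        have k2: "kf (r + q) (1 + l\<^sup>2) (x * (1 + l)) t = t powr (r + q - 1) * exp (- ((1 + l\<^sup>2) * t\<^sup>2) / 2 - x * (1 + l) * t)"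
          using tpos by (simp only: kf_def if_True)
        show ?thesis unfolding k1 k2 P EE by (simp only: mult_ac)
      qed (simp add: kf_def)
      have "(\<integral>\<^sup>+t. ennreal (kf q 1 x t * t * kf r 1 x (t * l)) \<partial>lborel)
          = (\<integral>\<^sup>+t. ennreal (l powr (r - 1)) * ennreal (kf (r + q) (1 + l\<^sup>2) (x * (1 + l)) t) \<partial>lborel)"
        by (intro nn_integral_cong) (simp add: pw ennreal_mult' kf_nonneg)
      also have "\<dots> = ennreal (l powr (r - 1)) * ennreal (Kf (r + q) (1 + l\<^sup>2) (x * (1 + l)))"
        using nn_Kf[OF m c] by (simp add: nn_integral_cmult)
      also have "\<dots> = ennreal (g l)"
        using True by (simp add: g_def ennreal_mult')
      finally show ?thesis .
    next
      case False
      have z0: "kf q 1 x t * t * kf r 1 x (t * l) = 0" for t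
        using False by (cases "0 < t") (auto simp: kf_def zero_less_mult_iff)
      have "(\<lambda>t. ennreal (kf q 1 x t * t * kf r 1 x (t * l))) = (\<lambda>t. 0)"
        by (rule ext) (simp only: z0 ennreal_0)
      then show ?thesis using False by (simp add: g_def)
    qed
  qed
  finally have nn: "(\<integral>\<^sup>+l. ennreal (g l) \<partial>lborel) = ennreal (Kf r 1 x * Kf q 1 x)" by simp
  show int: "integrable lborel g"
    by (rule integrableI_nn_integral_finite[OF gmeas _ nn]) (simp add: gnn)
  have "(\<integral>\<^sup>+l. ennreal (g l) \<partial>lborel) = ennreal (integral\<^sup>L lborel g)"
    by (rule nn_integral_eq_integral[OF int]) (simp add: gnn)
  then show "integral\<^sup>L lborel g = Kf r 1 x * Kf q 1 x"
    using nn Kf_pos[OF r, of 1 x] Kf_pos[OF q, of 1 x] integral_nonneg_AE[of g lborel] gnn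
    by (simp add: ennreal_inj)
qed



lemma Kf_rec:
  assumes s: "s > 0"
  shows "Kf (s + 2) 1 x = s * Kf s 1 x - x * Kf (s + 1) 1 x"
proof -
  define E where "E t = exp (- (t\<^sup>2) / 2 - x * t)" for t :: real
  define F where "F t = t powr s * E t" for t :: real
  define f where "f t = s * (t powr (s - 1) * E t) - t powr (s + 1) * E t - x * (t powr s * E t)" for t :: real
  have s1: "s + 1 > 0" "s + 2 > 0" using s by auto
  have ind: "indicator {0<..} t *\<^sub>R f t = s * kf s 1 x t - kf (s + 2) 1 x t - x * kf (s + 1) 1 x t" for t
    by (auto simp: f_def kf_def E_def indicator_def ac_simps)
  have int: "integrable lborel (\<lambda>t. s * kf s 1 x t - kf (s + 2) 1 x t - x * kf (s + 1) 1 x t)"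
    using kf_integrable[OF s, of 1] kf_integrable[OF s1(1), of 1] kf_integrable[OF s1(2), of 1] by auto
  have "(LBINT t=0..\<infinity>. f t) = 0 - 0"
  proof (rule interval_integral_FTC_integrable)
    show "(0::ereal) < \<infinity>" by simp
    fix t :: real assume "0 < ereal t" "ereal t < \<infinity>"
    then have t: "t > 0" by simp
    have "(F has_real_derivative (s * t powr (s - 1) * E t + t powr s * (E t * (- (2 * t) / 2 - x)))) (at t)"
      unfolding F_def E_def using t
      by (auto intro!: derivative_eq_intros simp: power2_eq_square)
    moreover have "s * t powr (s - 1) * E t + t powr s * (E t * (- (2 * t) / 2 - x)) = f t"
      using t by (simp add: f_def powr_add algebra_simps)
    ultimately show "(F has_vector_derivative f t) (at t)"
      by (simp add: has_real_derivative_iff_has_vector_derivative)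
    show "isCont f t" unfolding f_def E_def using t by (intro continuous_intros) auto
  next
    show "set_integrable lborel (einterval 0 \<infinity>) f"
    proof -
      have "einterval 0 \<infinity> = {0<..}" by (auto simp: einterval_def zero_ereal_def)
      then show ?thesis unfolding set_integrable_def using int ind by simp
    qed
    show "((F \<circ> real_of_ereal) \<longlongrightarrow> 0) (at_right 0)"
      unfolding zero_ereal_def ereal_tendsto_simps F_def E_def using s by real_asymp
    show "((F \<circ> real_of_ereal) \<longlongrightarrow> 0) (at_left \<infinity>)"
      unfolding ereal_tendsto_simps F_def E_def by real_asymp
  qed
  moreover have "(LBINT t=0..\<infinity>. f t) = s * Kf s 1 x - Kf (s + 2) 1 x - x * Kf (s + 1) 1 x"
    unfolding interval_lebesgue_integral_0_infty set_lebesgue_integral_def ind Kf_def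
    using kf_integrable[OF s, of 1] kf_integrable[OF s1(1), of 1] kf_integrable[OF s1(2), of 1] by simp
  ultimately show ?thesis by simp
qed


definition cc :: "real \<Rightarrow> real" where "cc l = (1 + l\<^sup>2) / (1 + l)\<^sup>2"

definition Phi :: "real \<Rightarrow> real \<Rightarrow> real \<Rightarrow> real" where
  "Phi m x l = (if 0 < l then (1 / (1 + l)) powr m * Kf m (cc l) x else 0)"

lemma cc_pos: "0 < l \<Longrightarrow> 0 < cc l"
  by (simp add: cc_def add_pos_nonneg)

lemma Phi_pos: "m > 0 \<Longrightarrow> 0 < l \<Longrightarrow> 0 < Phi m x l"
  by (simp add: Phi_def Kf_pos cc_pos)

lemma Phi_nonneg: "m > 0 \<Longrightarrow> 0 \<le> Phi m x l"
  using Phi_pos[of m l x] by (cases "0 < l") (auto simp: Phi_def)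

lemma prod_rep':
  fixes x r q m :: real
  assumes r: "r > 0" and q: "q > 0" and m: "r + q = m"
  shows "integrable lborel (\<lambda>l. l powr (r - 1) * Phi m x l)"
    "(\<integral>l. l powr (r - 1) * Phi m x l \<partial>lborel) = Kf r 1 x * Kf q 1 x"
proof -
  have eq: "(\<lambda>l. if 0 < l then l powr (r - 1) * Kf (r + q) (1 + l\<^sup>2) (x * (1 + l)) else 0)
      = (\<lambda>l. l powr (r - 1) * Phi m x l)"
  proof
    fix l :: real
    show "(if 0 < l then l powr (r - 1) * Kf (r + q) (1 + l\<^sup>2) (x * (1 + l)) else 0) = l powr (r - 1) * Phi m x l"
    proof (cases "0 < l")
      case True
      have k: "1 / (1 + l) > 0" using True by simp
      have "Kf m (1 + l\<^sup>2) (x * (1 + l)) = (1 / (1 + l)) powr m * Kf m ((1 + l\<^sup>2) * (1 / (1 + l))\<^sup>2) (x * (1 + l) * (1 / (1 + l)))"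
        by (rule Kf_scale[OF k])
      also have "(1 + l\<^sup>2) * (1 / (1 + l))\<^sup>2 = cc l" by (simp add: cc_def power_divide)
      also have "x * (1 + l) * (1 / (1 + l)) = x" using True by simp
      finally show ?thesis using True m by (simp add: Phi_def)
    qed (simp add: Phi_def)
  qed
  show "integrable lborel (\<lambda>l. l powr (r - 1) * Phi m x l)"
    using prod_rep(1)[OF r q, of x] unfolding eq .
  show "(\<integral>l. l powr (r - 1) * Phi m x l \<partial>lborel) = Kf r 1 x * Kf q 1 x"
    using prod_rep(2)[OF r q, of x] unfolding eq .
qed



lemma A_strict:
  fixes l l' :: real
  assumes "0 < l" "l < l'" "l * l' < 1"
  shows "2 * l / (1 + l\<^sup>2) < 2 * l' / (1 + l'\<^sup>2)"
proof -
  have "0 < (l' - l) * (1 - l * l')" using assms by (intro mult_pos_pos) auto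
  then have "l * (1 + l'\<^sup>2) < l' * (1 + l\<^sup>2)" by (simp add: algebra_simps power2_eq_square)
  then show ?thesis by (simp add: field_simps add_pos_nonneg)
qed

lemma Q_mono:
  fixes a x1 x2 :: real
  assumes a: "a > 0" and x: "x1 < x2"
  shows "(Kf (a + 1) 1 x2)\<^sup>2 * (Kf a 1 x1 * Kf (a + 2) 1 x1) < (Kf (a + 1) 1 x1)\<^sup>2 * (Kf a 1 x2 * Kf (a + 2) 1 x2)"
proof -
  define m where "m = 2 * a + 2"
  have m: "m > 0" using a by (simp add: m_def)
  define Gr where "Gr c = Kf m c x2 / Kf m c x1" for c
  have GM: "Gr c < Gr c'" if "0 < c" "c < c'" for c c'
  proof -
    have "Kf m c' x1 * Kf m c x2 < Kf m c x1 * Kf m c' x2"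
      by (rule Kf_ratio_mono[OF m that x])
    moreover have "Kf m c x1 > 0" "Kf m c' x1 > 0" using Kf_pos[OF m] that by auto
    ultimately show ?thesis by (simp add: Gr_def field_simps mult.commute)
  qed
  define w where "w l = l powr (a - 1) * Phi m x1 l + l powr (a + 1) * Phi m x1 l" for l
  define A where "A l = 2 * l / (1 + l\<^sup>2)" for l :: real
  define B where "B l = - Gr (cc l)" for l
  have pw1: "l powr (a + 1) = l powr (a - 1) * l\<^sup>2" "l powr a = l powr (a - 1) * l" if "0 < l" for l :: real
  proof -
    have "l powr (a + 1) = l powr ((a - 1) + 2)" by (rule arg_cong[where f="\<lambda>e. l powr e"]) simp
    also have "\<dots> = l powr (a - 1) * l powr 2" by (simp only: powr_add)
    also have "\<dots> = l powr (a - 1) * l\<^sup>2" using that by (simp add: powr_numeral)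
    finally show "l powr (a + 1) = l powr (a - 1) * l\<^sup>2" .
    have "l powr a = l powr ((a - 1) + 1)" by (rule arg_cong[where f="\<lambda>e. l powr e"]) simp
    also have "\<dots> = l powr (a - 1) * l powr 1" by (simp only: powr_add)
    also have "\<dots> = l powr (a - 1) * l" using that by simp
    finally show "l powr a = l powr (a - 1) * l" .
  qed
  have Phi2: "Phi m x1 l * Gr (cc l) = Phi m x2 l" for l
  proof (cases "0 < l")
    case True
    then have "Kf m (cc l) x1 > 0" using Kf_pos[OF m cc_pos] by auto
    then show ?thesis using True by (simp add: Phi_def Gr_def)
  qed (simp add: Phi_def)
  have wA: "w l * A l = 2 * (l powr (a + 1 - 1) * Phi m x1 l)" for l
  proof (cases "0 < l")
    case True
    have d: "1 + l\<^sup>2 > 0" by (simp add: add_pos_nonneg)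
    have w1: "w l = l powr (a - 1) * Phi m x1 l * (1 + l\<^sup>2)"
      unfolding w_def pw1(1)[OF True] by (simp add: algebra_simps)
    have "w l * A l = 2 * (l powr (a - 1) * l) * Phi m x1 l"
      unfolding w1 A_def using d by (simp add: field_simps)
    then show ?thesis using pw1(2)[OF True] by simp
  qed (simp add: w_def Phi_def)
  have wB: "w l * B l = - (l powr (a - 1) * Phi m x2 l + l powr (a + 2 - 1) * Phi m x2 l)" for l
    using Phi2[of l, symmetric] by (simp add: w_def B_def algebra_simps)
  have wAB: "w l * A l * B l = - 2 * (l powr (a + 1 - 1) * Phi m x2 l)" for l
  proof -
    have "w l * A l * B l = - 2 * (l powr (a + 1 - 1) * (Phi m x1 l * Gr (cc l)))"
      unfolding wA B_def by simp
    then show ?thesis unfolding Phi2 .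
  qed
  have w_eq: "w l = l powr (a - 1) * Phi m x1 l + l powr (a + 2 - 1) * Phi m x1 l" for l
    by (simp add: w_def ac_simps)
  have ma: "a + (a + 2) = m" "a + 2 + a = m" "a + 1 + (a + 1) = m" by (simp_all add: m_def)
  have a1: "a + 1 > 0" "a + 2 > 0" using a by auto
  note R1 = prod_rep'[OF a a1(2) ma(1)] and R2 = prod_rep'[OF a1(2) a ma(2)] and R3 = prod_rep'[OF a1(1) a1(1) ma(3)]
  have intw: "integrable lborel w" unfolding w_eq[abs_def] using R1(1)[of x1] R2(1)[of x1] by auto
  have intwA: "integrable lborel (\<lambda>l. w l * A l)" unfolding wA using R3(1)[of x1] by auto
  have intwB: "integrable lborel (\<lambda>l. w l * B l)" unfolding wB using R1(1)[of x2] R2(1)[of x2] by auto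
  have intwAB: "integrable lborel (\<lambda>l. w l * A l * B l)" unfolding wAB using R3(1)[of x2] by auto
  have Iw: "(\<integral>l. w l \<partial>lborel) = 2 * (Kf a 1 x1 * Kf (a + 2) 1 x1)"
    unfolding w_eq[abs_def] using R1[of x1] R2[of x1] by simp
  have IwA: "(\<integral>l. w l * A l \<partial>lborel) = 2 * (Kf (a + 1) 1 x1)\<^sup>2"
    unfolding wA using R3[of x1] by (simp add: power2_eq_square)
  have IwB: "(\<integral>l. w l * B l \<partial>lborel) = - 2 * (Kf a 1 x2 * Kf (a + 2) 1 x2)"
    unfolding wB using R1[of x2] R2[of x2] by simp
  have IwAB: "(\<integral>l. w l * A l * B l \<partial>lborel) = - 2 * (Kf (a + 1) 1 x2)\<^sup>2"
    unfolding wAB using R3[of x2] by (simp add: power2_eq_square)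
  have wpos: "0 < w l" if "0 < l" for l
    unfolding w_def using that Phi_pos[OF m that] by (intro add_pos_pos mult_pos_pos) auto
  have wzero: "w l = 0" if "\<not> 0 < l" for l
    using that by (simp add: w_def Phi_def)
  have ccA: "cc l = 1 / (1 + A l)" if "0 < l" for l
  proof -
    have d: "1 + l\<^sup>2 \<noteq> 0" "1 + l * l \<noteq> 0" using add_pos_nonneg[of 1 "l\<^sup>2"] by (auto simp: power2_eq_square)
    have "1 + A l = (1 + l)\<^sup>2 / (1 + l\<^sup>2)"
      unfolding A_def using d by (simp add: field_simps power2_eq_square)
    then show ?thesis by (simp add: cc_def)
  qed
  have Apos: "0 \<le> A l" if "0 < l" for l using that by (simp add: A_def)
  have key: "(A l - A l') * (B l - B l') > 0" if "0 < l" "0 < l'" "A l < A l'" for l l'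
  proof -
    have "cc l' < cc l" unfolding ccA[OF that(1)] ccA[OF that(2)]
      using that Apos[OF that(1)] by (simp add: divide_strict_left_mono add_pos_nonneg)
    then have "Gr (cc l') < Gr (cc l)" using GM cc_pos[OF that(2)] by auto
    then have "B l - B l' < 0" by (simp add: B_def)
    then show ?thesis using that(3) by (intro mult_neg_neg) auto
  qed
  have ord: "0 \<le> w l * w l' * ((A l - A l') * (B l - B l'))" for l l'
  proof (cases "0 < l \<and> 0 < l'")
    case True
    then have "0 \<le> (A l - A l') * (B l - B l')"
      using key[of l l'] key[of l' l] by (cases "A l < A l'"; cases "A l' < A l") (auto simp: mult.commute algebra_simps)
    then show ?thesis using True wpos by (metis less_imp_le mult_nonneg_nonneg)
  next
    case False
    then show ?thesis using wzero by auto
  qed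
  have strict: "0 < w l * w l' * ((A l - A l') * (B l - B l'))"
    if "1/4 \<le> l" "l \<le> 1/2" "3/4 \<le> l'" "l' \<le> 1" for l l'
  proof -
    have "l * l' < 1"
    proof -
      have "l * l' \<le> 1/2 * 1" using that by (intro mult_mono) auto
      then show ?thesis by simp
    qed
    then have "A l < A l'" unfolding A_def using that by (intro A_strict) auto
    then have k: "0 < (A l - A l') * (B l - B l')" using key[of l l'] that by auto
    have "0 < w l" "0 < w l'" using that wpos by auto
    then show ?thesis using k by (metis mult_pos_pos)
  qed
  have "(\<integral>l. w l * A l \<partial>lborel) * (\<integral>l. w l * B l \<partial>lborel)
       < (\<integral>l. w l \<partial>lborel) * (\<integral>l. w l * A l * B l \<partial>lborel)"
    by (rule cheb[where p="1/4" and q="1/2" and r="3/4" and s=1, OF intw intwA intwB intwAB ord])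
       (auto intro: strict)
  then show ?thesis unfolding Iw IwA IwB IwAB by (simp add: algebra_simps)
qed



lemma pcf_Kf:
  assumes "\<alpha> < 0"
  shows "pcf \<alpha> x = exp (- (x\<^sup>2) / 4) / Gamma (- \<alpha>) * Kf (- \<alpha>) 1 x"
  using Kf_HK[of "- \<alpha> - 1" x] assms by (simp add: pcf_def)

lemma Rtilde_eq:
  fixes a x :: real
  assumes a: "a > 0"
  shows "Rtilde (- a) x = (a + 1) / a * ((Kf (a + 1) 1 x)\<^sup>2 / (Kf a 1 x * Kf (a + 2) 1 x))"
proof -
  define E where "E = exp (- (x\<^sup>2) / 4)"
  have E: "E > 0" by (simp add: E_def)
  have p0: "pcf (- a) x = E / Gamma a * Kf a 1 x" using pcf_Kf[of "- a" x] a by (simp add: E_def)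
  have p1: "pcf (- a - 1) x = E / Gamma (a + 1) * Kf (a + 1) 1 x" using pcf_Kf[of "- a - 1" x] a by (simp add: E_def add.commute)
  have p2: "pcf (- a - 2) x = E / Gamma (a + 2) * Kf (a + 2) 1 x" using pcf_Kf[of "- a - 2" x] a by (simp add: E_def add.commute)
  have na: "a \<notin> \<int>\<^sub>\<le>\<^sub>0" "a + 1 \<notin> \<int>\<^sub>\<le>\<^sub>0" using a nonpos_Ints_nonpos by force+
  have g1: "Gamma (a + 1) = a * Gamma a" using Gamma_plus1[OF na(1)] .
  have g2: "Gamma (a + 2) = (a + 1) * a * Gamma a"
    using Gamma_plus1[OF na(2)] g1 by (simp add: add.assoc)
  have pos: "Gamma a > 0" "Kf a 1 x > 0" "Kf (a + 1) 1 x > 0" "Kf (a + 2) 1 x > 0"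
    using a by (auto intro!: Kf_pos)
  have "Rtilde (- a) x = (pcf (- a - 1) x)\<^sup>2 / (pcf (- a) x * pcf (- a - 2) x)"
    by (simp add: Rtilde_def)
  also have "\<dots> = (a + 1) / a * ((Kf (a + 1) 1 x)\<^sup>2 / (Kf a 1 x * Kf (a + 2) 1 x))"
  proof -
    have g0: "Gamma a \<noteq> 0" using Gamma_real_pos[OF a] by linarith
    have nz: "Gamma a \<noteq> 0" "Kf a 1 x \<noteq> 0" "Kf (a + 1) 1 x \<noteq> 0" "Kf (a + 2) 1 x \<noteq> 0" "E \<noteq> 0" "a \<noteq> 0"
      using pos E a g0 by auto
    show ?thesis unfolding p0 p1 p2 g1 g2 using nz
      by (simp add: field_simps power2_eq_square)
  qed
  finally show ?thesis .
qed

theorem proposition3p3: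
  fixes \<nu> :: real
  assumes "\<nu> < 0"
  shows "strict_antimono_on UNIV (Rtilde \<nu>) \<and>
         (\<forall>x::real. 1 < Rtilde \<nu> x \<and> Rtilde \<nu> x < (\<nu> - 1) / \<nu>)"
proof -
  define a where "a = - \<nu>"
  have a: "a > 0" using assms by (simp add: a_def)
  have nu: "\<nu> = - a" by (simp add: a_def)
  define Q where "Q x = (Kf (a + 1) 1 x)\<^sup>2 / (Kf a 1 x * Kf (a + 2) 1 x)" for x
  have R: "Rtilde \<nu> x = (a + 1) / a * Q x" for x unfolding nu Q_def by (rule Rtilde_eq[OF a])
  have pos: "Kf a 1 x > 0" "Kf (a + 1) 1 x > 0" "Kf (a + 2) 1 x > 0" "Kf (a + 3) 1 x > 0" for x
    using a by (auto intro!: Kf_pos)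
  have bounds: "a / (a + 1) < Q x \<and> Q x < 1" for x
  proof -
    define \<alpha> \<beta> \<gamma> \<delta> where "\<alpha> = Kf a 1 x" and "\<beta> = Kf (a + 1) 1 x" and "\<gamma> = Kf (a + 2) 1 x" and "\<delta> = Kf (a + 3) 1 x"
    have cs1: "\<beta>\<^sup>2 < \<alpha> * \<gamma>" using Kf_CS[OF a, of 1 x] by (simp add: \<alpha>_def \<beta>_def \<gamma>_def)
    have cs2: "\<gamma>\<^sup>2 < \<beta> * \<delta>" using Kf_CS[of "a + 1" 1 x] a
      by (simp add: \<beta>_def \<gamma>_def \<delta>_def add.assoc)
    have r1: "\<gamma> = a * \<alpha> - x * \<beta>" using Kf_rec[OF a, of x] by (simp add: \<alpha>_def \<beta>_def \<gamma>_def)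
    have r2: "\<delta> = (a + 1) * \<beta> - x * \<gamma>" using Kf_rec[of "a + 1" x] a
      by (simp add: \<beta>_def \<gamma>_def \<delta>_def add.assoc)
    have p: "\<alpha> > 0" "\<beta> > 0" "\<gamma> > 0" using pos[of x] by (simp_all add: \<alpha>_def \<beta>_def \<gamma>_def)
    have gg: "\<gamma> * \<gamma> = (a * \<alpha> - x * \<beta>) * \<gamma>" using r1 by simp
    have "(a + 1) * \<beta>\<^sup>2 - a * \<alpha> * \<gamma> = \<beta> * \<delta> - \<gamma>\<^sup>2"
      unfolding r2 power2_eq_square gg by (simp add: algebra_simps)
    then have low: "a * (\<alpha> * \<gamma>) < (a + 1) * \<beta>\<^sup>2" using cs2 by (simp add: algebra_simps)
    have Qe: "Q x = \<beta>\<^sup>2 / (\<alpha> * \<gamma>)" by (simp add: Q_def \<alpha>_def \<beta>_def \<gamma>_def)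
    show ?thesis unfolding Qe using low cs1 p a by (simp add: field_simps)
  qed
  have mono: "Q y < Q x" if "x < y" for x y
    using Q_mono[OF a that] pos[of x] pos[of y] unfolding Q_def
    by (simp add: field_simps)
  show ?thesis
  proof
    show "strict_antimono_on UNIV (Rtilde \<nu>)"
      unfolding monotone_on_def R
    proof (intro ballI impI)
      fix x y :: real assume "x < y"
      then have "Q y < Q x" using mono by auto
      moreover have "(a + 1) / a > 0" using a by simp
      ultimately show "(a + 1) / a * Q y < (a + 1) / a * Q x" by (rule mult_strict_left_mono)
    qed
    show "\<forall>x. 1 < Rtilde \<nu> x \<and> Rtilde \<nu> x < (\<nu> - 1) / \<nu>"
    proof
      fix x
      have e: "(\<nu> - 1) / \<nu> = (a + 1) / a" using a by (simp add: nu field_simps)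
      have b1: "a / (a + 1) < Q x" and b2: "Q x < 1" using bounds[of x] by auto
      have ap: "(a + 1) / a > 0" using a by simp
      have up: "(a + 1) / a * Q x < (a + 1) / a * 1" using b2 ap by (rule mult_strict_left_mono)
      have "a < (a + 1) * Q x" using b1 a by (simp add: field_simps)
      then have lo: "1 < (a + 1) / a * Q x" using a by (simp add: field_simps)
      show "1 < Rtilde \<nu> x \<and> Rtilde \<nu> x < (\<nu> - 1) / \<nu>"
        unfolding R e using up lo by simp
    qed
  qed
qed


end
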